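(* Let $W\subseteq\mathbb{R}^n$ be a linear subspace of dimension $d<n$. If $A\subseteq\mathbb{R}$ is countable, then the set $\mathcal{A} := \bigl\{(y_1,\dotsc,y_n)\in\mathbb{R}^n:\sum_{i=1}^n\mathbb{1}_{\{y_i - w_i\in A\}}\ge d+1\text{ for some }(w_1,\dotsc,w_n)\in W\bigr\}$ has Lebesgue measure $0$. *)

theory Defs
  imports "HOL-Analysis.Analysis"
begin

end

theory Submission
  imports Defs
begin

lemma dim_union_le:
  fixes W B :: "(real ^ 'n) set"
  assumes "finite B"
  shows "dim (W \<union> B) \<le> dim W + card B"
proof -
  obtain C where C: "C \<subseteq> W" "independent C" "W \<subseteq> span C" "card C = dim W"
    using basis_exists by blast
  have fC: "finite C" using C(2) finiteI_independent by blast
  have "W \<union> B \<subseteq> span (C \<union> B)"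
    using C(3) span_mono[of C "C \<union> B"] span_superset[of "C \<union> B"] by blast
  hence "dim (W \<union> B) \<le> card (C \<union> B)"
    using dim_le_card fC assms by blast
  also have "\<dots> \<le> card C + card B" by (rule card_Un_le)
  finally show ?thesis using C(4) by simp
qed

lemma piece_negligible:
  fixes W :: "(real ^ 'n) set" and S :: "'n set" and c :: "real ^ 'n"
  assumes "dim W = d" "card S = d + 1"
  shows "negligible ((+) c ` span (W \<union> (\<lambda>j. axis j (1::real)) ` (- S)))"
proof -
  let ?B = "(\<lambda>j. axis j (1::real)) ` (- S)"
  have "card ?B \<le> card (- S)" by (rule card_image_le) simp
  also have "card (- S) = CARD('n) - card S"
    by (simp add: Compl_eq_Diff_UNIV card_Diff_subset)
  finally have "dim (W \<union> ?B) \<le> d + (CARD('n) - (d+1))"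
    using dim_union_le[of ?B W] assms by simp
  moreover have "card S \<le> CARD('n)" by (simp add: card_mono)
  ultimately have "dim (span (W \<union> ?B)) < CARD('n)" using assms by simp
  hence "negligible (span (W \<union> ?B))"
    using negligible_lowdim by (metis DIM_cart DIM_real mult_1_right)
  thus ?thesis by (rule negligible_translation)
qed

theorem lemma6p30:
  fixes W :: "(real ^ 'n) set" and A :: "real set" and d :: nat
  assumes "subspace W" and "dim W = d" and "d < CARD('n)"
    and "countable A"
  shows "{y :: real ^ 'n. \<exists>w\<in>W. card {i. y $ i - w $ i \<in> A} \<ge> d + 1}
           \<in> null_sets lebesgue"
proof -
  define I where "I = Sigma {S :: 'n set. card S = d + 1} (\<lambda>S. PiE S (\<lambda>_. A))"
  define T where "T = (\<lambda>(S, f). (+) (\<chi> i. if i \<in> S then f i else 0)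
        ` span (W \<union> (\<lambda>j. axis j (1::real)) ` (- S)))"
  have cI: "countable I" unfolding I_def
    by (rule countable_SIGMA, rule countable_finite, simp, rule countable_PiE) (auto simp: assms(4))
  have neg: "negligible (\<Union> (T ` I))"
    apply (rule negligible_countable_Union)
    using cI apply simp
    unfolding T_def I_def using piece_negligible[OF assms(2)] by auto
  have sub: "{y :: real ^ 'n. \<exists>w\<in>W. card {i. y $ i - w $ i \<in> A} \<ge> d + 1} \<subseteq> \<Union> (T ` I)"
  proof
    fix y :: "real ^ 'n"
    assume "y \<in> {y. \<exists>w\<in>W. card {i. y $ i - w $ i \<in> A} \<ge> d + 1}"
    then obtain w where w: "w \<in> W" "card {i. y $ i - w $ i \<in> A} \<ge> d + 1" by auto
    obtain S where S: "S \<subseteq> {i. y $ i - w $ i \<in> A}" "card S = d + 1"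
      using obtain_subset_with_card_n[OF w(2)] by blast
    define f where "f = restrict (\<lambda>i. y $ i - w $ i) S"
    have fI: "(S, f) \<in> I" unfolding I_def f_def using S by auto
    define c :: "real ^ 'n" where "c = (\<chi> i. if i \<in> S then f i else 0)"
    define z where "z = y - w - c"
    have z0: "\<And>i. i \<in> S \<Longrightarrow> z $ i = 0" unfolding z_def c_def f_def by simp
    have "z = (\<Sum>i\<in>UNIV. z $ i *s axis i 1)" by (rule basis_expansion[symmetric])
    also have "\<dots> = (\<Sum>i\<in>-S. z $ i *s axis i 1)"
      by (rule sum.mono_neutral_right) (auto simp: z0)
    finally have zeq: "z = (\<Sum>i\<in>-S. z $ i *s axis i 1)" .
    let ?U = "W \<union> (\<lambda>j. axis j (1::real)) ` (- S)"
    have "z \<in> span ?U"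
      apply (subst zeq)
      apply (rule span_sum)
      apply (simp only: scalar_mult_eq_scaleR)
      apply (rule span_mul)
      apply (rule span_base)
      by auto
    moreover have "w \<in> span ?U" using w(1) span_base by blast
    ultimately have "w + z \<in> span ?U" by (simp add: span_add)
    moreover have "y = c + (w + z)" unfolding z_def by simp
    ultimately have "y \<in> T (S, f)" unfolding T_def c_def by auto
    thus "y \<in> \<Union> (T ` I)" using fI by blast
  qed
  have "negligible {y :: real ^ 'n. \<exists>w\<in>W. card {i. y $ i - w $ i \<in> A} \<ge> d + 1}"
    using negligible_subset[OF neg sub] .
  thus ?thesis by (simp add: negligible_iff_null_sets)
qed

end
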